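(* For any algorithm for the problem of RL with once-per-episode feedback, there exists a $\tilde d_{\mathbb{P}}$-dimensional linear mixture MDP with a $\tilde d_{\mathbb{G}}$-dimensional linear feedback function such that the regret incurred by this algorithm over $K$ episodes is at least $\Omega(\tilde d_{\mathbb{P}}\sqrt{K}+\tilde d_{\mathbb{G}}\sqrt{K})$.
   Context: RL with once-per-episode feedback: episodic MDP $(\mathcal{S},\mathcal{A},H,\mathbb{P})$ with fixed initial state $s_1$, trajectories $\tau=(s_1,a_1,\dots,s_H,a_H)$. In each episode $k=1,\dots,K$ the agent runs a (history-dependent) policy $\pi_k$, obtains a trajectory $\tau_k$, and at the end receives feedback $y_k\in\{0,1\}$ determined by an unknown function $g^*:\mathrm{Traj}\to[0,1]$ of the trajectory ($g^*(\tau_k)$ is the mean of $y_k$). $V^\pi_1(s_1)=\mathbb{E}_{\tau\sim(\mathbb{P},\pi)}g^*(\tau)$, $V^*_1(s_1)=\max_\pi V_1^\pi(s_1)$, regret $Reg(K)=\sum_{k=1}^K(V^*_1(s_1)-V^{\pi_k}_1(s_1))$. A $\tilde d_{\mathbb{P}}$-dimensional linear mixture MDP has $\mathbb{P}(s'|s,a)=\psi(s,a,s')^\top\theta$ for a known feature map $\psi:\mathcal{S}\times\mathcal{A}\times\mathcal{S}\to\mathbb{R}^{\tilde d_{\mathbb{P}}}$ with $\|\sum_{s'}\psi(s,a,s')V(s')\|_2\le1$ for all $V:\mathcal{S}\to[0,1]$, and an unknown $\theta$ of bounded norm. A $\tilde d_{\mathbb{G}}$-dimensional linear feedback function is $g^*(\tau)=\phi(\tau)^\top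 w$ for a known feature map $\phi:\mathrm{Traj}\to\mathbb{R}^{\tilde d_{\mathbb{G}}}$ and an unknown bounded vector $w$. *)

theory Defs
  imports "HOL-Probability.Probability"
begin

text \<open>States and actions are natural numbers; an instance has state space
  {0..<nS}, action space {0..<nA}, horizon H and initial state s1.
  A trajectory is the list [(s_1,a_1),...,(s_H,a_H)].
  Vectors of dimension d are functions nat => real, only indices < d matter.\<close>

type_synonym traj = "(nat \<times> nat) list"

text \<open>A (history-dependent, randomized) within-episode policy: given the partial
  trajectory so far and the current state, a distribution over actions.\<close>
type_synonym policy = "traj \<Rightarrow> nat \<Rightarrow> nat pmf"

text \<open>Known information given to the algorithm:
  (dP, dG, nS, nA, H, s1, psi, phi).\<close>
type_synonym info =
  "nat \<times> nat \<times> nat \<times> nat \<times> nat \<times> nat \<times> (nat \<Rightarrow> nat \<Rightarrow> nat \<Rightarrow> nat \<Rightarrow> real) \<times> (traj \<Rightarrow> nat \<Rightarrow> real)"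

text \<open>An algorithm: from known information and the history of past episodes
  (trajectory, binary feedback) it chooses the policy of the next episode.\<close>
type_synonym algorithm = "info \<Rightarrow> (traj \<times> bool) list \<Rightarrow> policy"

definition vnorm :: "nat \<Rightarrow> (nat \<Rightarrow> real) \<Rightarrow> real" where
  "vnorm d x = sqrt (\<Sum>i<d. (x i)\<^sup>2)"

text \<open>Running one episode of H steps. Actions outside the action space are
  replaced by action 0 (convention).\<close>
primrec run_episode ::
  "(nat \<Rightarrow> nat \<Rightarrow> nat pmf) \<Rightarrow> nat \<Rightarrow> policy \<Rightarrow> nat \<Rightarrow> traj \<Rightarrow> nat \<Rightarrow> traj pmf" where
  "run_episode P nA pol 0 tr s = return_pmf tr"
| "run_episode P nA pol (Suc n) tr s =
     bind_pmf (pol tr s) (\<lambda>a0.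
       let a = (if a0 < nA then a0 else 0); tr' = tr @ [(s, a)] in
       if n = 0 then return_pmf tr'
       else bind_pmf (P s a) (\<lambda>s'. run_episode P nA pol n tr' s'))"

definition value_of ::
  "(nat \<Rightarrow> nat \<Rightarrow> nat pmf) \<Rightarrow> nat \<Rightarrow> nat \<Rightarrow> nat \<Rightarrow> (traj \<Rightarrow> real) \<Rightarrow> policy \<Rightarrow> real" where
  "value_of P nA H s1 g pol = measure_pmf.expectation (run_episode P nA pol H [] s1) g"

definition opt_value ::
  "(nat \<Rightarrow> nat \<Rightarrow> nat pmf) \<Rightarrow> nat \<Rightarrow> nat \<Rightarrow> nat \<Rightarrow> (traj \<Rightarrow> real) \<Rightarrow> real" where
  "opt_value P nA H s1 g = (SUP pol. value_of P nA H s1 g pol)"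

primrec interact ::
  "(nat \<Rightarrow> nat \<Rightarrow> nat pmf) \<Rightarrow> nat \<Rightarrow> nat \<Rightarrow> nat \<Rightarrow> (traj \<Rightarrow> real)
     \<Rightarrow> ((traj \<times> bool) list \<Rightarrow> policy) \<Rightarrow> nat \<Rightarrow> (traj \<times> bool) list pmf" where
  "interact P nA H s1 g Alg 0 = return_pmf []"
| "interact P nA H s1 g Alg (Suc k) =
     bind_pmf (interact P nA H s1 g Alg k) (\<lambda>h.
       bind_pmf (run_episode P nA (Alg h) H [] s1) (\<lambda>tr.
         bind_pmf (bernoulli_pmf (g tr)) (\<lambda>y. return_pmf (h @ [(tr, y)]))))"

definition regret ::
  "(nat \<Rightarrow> nat \<Rightarrow> nat pmf) \<Rightarrow> nat \<Rightarrow> nat \<Rightarrow> nat \<Rightarrow> (traj \<Rightarrow> real)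
     \<Rightarrow> ((traj \<times> bool) list \<Rightarrow> policy) \<Rightarrow> nat \<Rightarrow> (traj \<times> bool) list \<Rightarrow> real" where
  "regret P nA H s1 g Alg K h =
     (\<Sum>k<K. opt_value P nA H s1 g - value_of P nA H s1 g (Alg (take k h)))"

definition expected_regret ::
  "(nat \<Rightarrow> nat \<Rightarrow> nat pmf) \<Rightarrow> nat \<Rightarrow> nat \<Rightarrow> nat \<Rightarrow> (traj \<Rightarrow> real)
     \<Rightarrow> ((traj \<times> bool) list \<Rightarrow> policy) \<Rightarrow> nat \<Rightarrow> real" where
  "expected_regret P nA H s1 g Alg K =
     measure_pmf.expectation (interact P nA H s1 g Alg K) (regret P nA H s1 g Alg K)"

definition linear_mixture ::
  "nat \<Rightarrow> nat \<Rightarrow> nat \<Rightarrow> (nat \<Rightarrow> nat \<Rightarrow> nat \<Rightarrow> nat \<Rightarrow> real) \<Rightarrow> (nat \<Rightarrow> real)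
     \<Rightarrow> (nat \<Rightarrow> nat \<Rightarrow> nat pmf) \<Rightarrow> real \<Rightarrow> bool" where
  "linear_mixture dP nS nA psi theta P B \<longleftrightarrow>
     (\<forall>s<nS. \<forall>a<nA. set_pmf (P s a) \<subseteq> {..<nS} \<and>
        (\<forall>s'<nS. pmf (P s a) s' = (\<Sum>i<dP. psi s a s' i * theta i))) \<and>
     (\<forall>s<nS. \<forall>a<nA. \<forall>V::nat \<Rightarrow> real. (\<forall>s'<nS. 0 \<le> V s' \<and> V s' \<le> 1) \<longrightarrow>
        vnorm dP (\<lambda>i. \<Sum>s'<nS. psi s a s' i * V s') \<le> 1) \<and>
     vnorm dP theta \<le> B"

definition valid_traj :: "nat \<Rightarrow> nat \<Rightarrow> nat \<Rightarrow> traj \<Rightarrow> bool" where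
  "valid_traj nS nA H tr \<longleftrightarrow> length tr = H \<and> (\<forall>(s, a) \<in> set tr. s < nS \<and> a < nA)"

definition lin_feedback :: "nat \<Rightarrow> (traj \<Rightarrow> nat \<Rightarrow> real) \<Rightarrow> (nat \<Rightarrow> real) \<Rightarrow> traj \<Rightarrow> real" where
  "lin_feedback dG phi w tr = (\<Sum>i<dG. phi tr i * w i)"

definition linear_feedback ::
  "nat \<Rightarrow> nat \<Rightarrow> nat \<Rightarrow> nat \<Rightarrow> (traj \<Rightarrow> nat \<Rightarrow> real) \<Rightarrow> (nat \<Rightarrow> real) \<Rightarrow> real \<Rightarrow> bool" where
  "linear_feedback dG nS nA H phi w B \<longleftrightarrow>
     (\<forall>tr. valid_traj nS nA H tr \<longrightarrow> 0 \<le> lin_feedback dG phi w tr \<and> lin_feedback dG phi w tr \<le> 1) \<and>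
     vnorm dG w \<le> B"

end

theory Submission
  imports Defs
begin

definition bcS :: "'a set \<Rightarrow> 'a pmf \<Rightarrow> 'a pmf \<Rightarrow> real" where
  "bcS S p q = (\<Sum>x\<in>S. sqrt (pmf p x * pmf q x))"

lemma sqrt_superadd:
  fixes a b c d :: real
  assumes "0\<le>a" "0\<le>b" "0\<le>c" "0\<le>d"
  shows "sqrt (a*b) + sqrt (c*d) \<le> sqrt ((a+c)*(b+d))"
proof (rule real_le_rsqrt)
  have e: "2 * (sqrt (a*b) * sqrt (c*d)) \<le> a*d + c*b"
  proof -
    have "sqrt (a*b) * sqrt (c*d) = sqrt (a*d) * sqrt (c*b)"
      by (simp add: real_sqrt_mult[symmetric] ac_simps)
    moreover have "0 \<le> (sqrt (a*d) - sqrt (c*b))^2" by simp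
    ultimately show ?thesis using assms
      by (simp add: power2_eq_square algebra_simps)
  qed
  have "(sqrt (a*b) + sqrt (c*d))^2 = a*b + c*d + 2 * (sqrt (a*b) * sqrt (c*d))"
    using assms by (simp add: power2_eq_square algebra_simps)
  also have "\<dots> \<le> (a+c)*(b+d)" using e by (simp add: algebra_simps)
  finally show "(sqrt (a*b) + sqrt (c*d))^2 \<le> (a+c)*(b+d)" .
qed

lemma sum_sqrt_le:
  fixes f g :: "'a \<Rightarrow> real"
  assumes "finite S" "\<And>x. x\<in>S \<Longrightarrow> 0 \<le> f x" "\<And>x. x\<in>S \<Longrightarrow> 0 \<le> g x"
  shows "(\<Sum>x\<in>S. sqrt (f x * g x)) \<le> sqrt ((\<Sum>x\<in>S. f x) * (\<Sum>x\<in>S. g x))"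
  using assms
proof (induction S rule: finite_induct)
  case empty then show ?case by simp
next
  case (insert y F)
  have "(\<Sum>x\<in>insert y F. sqrt (f x * g x)) = sqrt (f y * g y) + (\<Sum>x\<in>F. sqrt (f x * g x))"
    using insert by simp
  also have "\<dots> \<le> sqrt (f y * g y) + sqrt ((\<Sum>x\<in>F. f x) * (\<Sum>x\<in>F. g x))"
    using insert by simp
  also have "\<dots> \<le> sqrt ((f y + (\<Sum>x\<in>F. f x)) * (g y + (\<Sum>x\<in>F. g x)))"
    by (rule sqrt_superadd) (use insert in \<open>auto intro: sum_nonneg\<close>)
  also have "\<dots> = sqrt ((\<Sum>x\<in>insert y F. f x) * (\<Sum>x\<in>insert y F. g x))"
    using insert by simp
  finally show ?case .
qed

lemma expectation_fin:
  fixes f :: "'a \<Rightarrow> real"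
  assumes "finite A" "set_pmf M \<subseteq> A"
  shows "measure_pmf.expectation M f = (\<Sum>a\<in>A. pmf M a * f a)"
  using integral_measure_pmf[OF assms(1), of M f] assms(2) by auto

lemma pmf_bind_fin:
  assumes "finite S" "set_pmf p \<subseteq> S"
  shows "pmf (bind_pmf p k) z = (\<Sum>x\<in>S. pmf p x * pmf (k x) z)"
  unfolding pmf_bind by (rule expectation_fin[OF assms])

lemma bc_bind:
  assumes S: "finite S" "set_pmf p \<subseteq> S" "set_pmf q \<subseteq> S" and T: "finite T"
    and k: "\<And>x. x\<in>S \<Longrightarrow> set_pmf (k1 x) \<subseteq> T" "\<And>x. x\<in>S \<Longrightarrow> set_pmf (k2 x) \<subseteq> T"
    and b: "\<And>x. x\<in>S \<Longrightarrow> \<beta> \<le> bcS T (k1 x) (k2 x)"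
  shows "\<beta> * bcS S p q \<le> bcS T (bind_pmf p k1) (bind_pmf q k2)"
proof -
  have "\<beta> * bcS S p q = (\<Sum>x\<in>S. sqrt (pmf p x * pmf q x) * \<beta>)"
    unfolding bcS_def by (simp add: sum_distrib_left ac_simps)
  also have "\<dots> \<le> (\<Sum>x\<in>S. sqrt (pmf p x * pmf q x) * bcS T (k1 x) (k2 x))"
    by (rule sum_mono, rule mult_left_mono) (use b in auto)
  also have "\<dots> = (\<Sum>z\<in>T. \<Sum>x\<in>S. sqrt ((pmf p x * pmf (k1 x) z) * (pmf q x * pmf (k2 x) z)))"
    unfolding bcS_def sum_distrib_left
    by (subst sum.swap) (simp add: real_sqrt_mult[symmetric] ac_simps)
  also have "\<dots> \<le> (\<Sum>z\<in>T. sqrt ((\<Sum>x\<in>S. pmf p x * pmf (k1 x) z) * (\<Sum>x\<in>S. pmf q x * pmf (k2 x) z)))"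
    by (rule sum_mono, rule sum_sqrt_le) (use S in auto)
  also have "\<dots> = bcS T (bind_pmf p k1) (bind_pmf q k2)"
    unfolding bcS_def by (simp add: pmf_bind_fin[OF S(1,2)] pmf_bind_fin[OF S(1,3)])
  finally show ?thesis .
qed

lemma bc_self:
  assumes "finite S" "set_pmf p \<subseteq> S"
  shows "bcS S p p = 1"
  unfolding bcS_def using sum_pmf_eq_1[OF assms] by simp

lemma bc_nonneg: "0 \<le> bcS S p q"
  unfolding bcS_def by (rule sum_nonneg) simp

lemma overlap:
  fixes f :: "'a \<Rightarrow> real"
  assumes S: "finite S" "set_pmf p \<subseteq> S" "set_pmf q \<subseteq> S"
    and f: "\<And>x. x\<in>S \<Longrightarrow> 0 \<le> f x \<and> f x \<le> 1"
  shows "(bcS S p q)^2 / 2 \<le> (\<Sum>x\<in>S. pmf p x * f x) + (\<Sum>x\<in>S. pmf q x * (1 - f x))"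
proof -
  define mi where "mi x = min (pmf p x) (pmf q x)" for x
  define ma where "ma x = max (pmf p x) (pmf q x)" for x
  have pq: "pmf p x * pmf q x = mi x * ma x" for x
    unfolding mi_def ma_def by (cases "pmf p x \<le> pmf q x") auto
  have "bcS S p q \<le> sqrt ((\<Sum>x\<in>S. mi x) * (\<Sum>x\<in>S. ma x))"
    unfolding bcS_def pq by (rule sum_sqrt_le) (auto simp: mi_def ma_def S max_def)
  hence "(bcS S p q)^2 \<le> (sqrt ((\<Sum>x\<in>S. mi x) * (\<Sum>x\<in>S. ma x)))^2"
    using bc_nonneg[of S p q] by (rule power_mono)
  moreover have "0 \<le> (\<Sum>x\<in>S. mi x) * (\<Sum>x\<in>S. ma x)"
    by (intro mult_nonneg_nonneg sum_nonneg) (auto simp: mi_def ma_def max_def)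
  ultimately have "(bcS S p q)^2 \<le> (\<Sum>x\<in>S. mi x) * (\<Sum>x\<in>S. ma x)"
    by simp
  also have "\<dots> \<le> (\<Sum>x\<in>S. mi x) * 2"
  proof (rule mult_left_mono)
    have "(\<Sum>x\<in>S. ma x) \<le> (\<Sum>x\<in>S. pmf p x + pmf q x)"
      by (rule sum_mono) (auto simp: ma_def)
    also have "\<dots> = 2" using sum_pmf_eq_1[OF S(1,2)] sum_pmf_eq_1[OF S(1,3)]
      by (simp add: sum.distrib)
    finally show "(\<Sum>x\<in>S. ma x) \<le> 2" .
    show "0 \<le> (\<Sum>x\<in>S. mi x)" by (rule sum_nonneg) (auto simp: mi_def)
  qed
  also have "(\<Sum>x\<in>S. mi x) \<le> (\<Sum>x\<in>S. pmf p x * f x + pmf q x * (1 - f x))"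
  proof (rule sum_mono)
    fix x assume "x \<in> S"
    hence "0 \<le> f x" "f x \<le> 1" using f by auto
    hence "mi x * f x \<le> pmf p x * f x" "mi x * (1 - f x) \<le> pmf q x * (1 - f x)"
      by (auto intro!: mult_right_mono simp: mi_def)
    thus "mi x \<le> pmf p x * f x + pmf q x * (1 - f x)" by (simp add: algebra_simps)
  qed
  finally show ?thesis by (simp add: sum.distrib)
qed

definition TR :: "nat \<Rightarrow> nat \<Rightarrow> nat \<Rightarrow> traj set" where
  "TR nS nA H = {tr. set tr \<subseteq> {..<nS} \<times> {..<nA} \<and> length tr = H}"

definition HS :: "nat \<Rightarrow> nat \<Rightarrow> nat \<Rightarrow> nat \<Rightarrow> (traj \<times> bool) list set" where
  "HS nS nA H k = {h. set h \<subseteq> TR nS nA H \<times> UNIV \<and> length h = k}"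

lemma finite_TR: "finite (TR nS nA H)"
  unfolding TR_def by (rule finite_lists_length_eq) auto

lemma finite_HS: "finite (HS nS nA H k)"
  unfolding HS_def by (rule finite_lists_length_eq) (auto simp: finite_TR)

lemma run_support:
  assumes P: "\<And>s a. s < nS \<Longrightarrow> a < nA \<Longrightarrow> set_pmf (P s a) \<subseteq> {..<nS}"
    and nA: "0 < nA"
  shows "s < nS \<Longrightarrow> set tr \<subseteq> {..<nS} \<times> {..<nA} \<Longrightarrow>
    set_pmf (run_episode P nA pol n tr s) \<subseteq> {tr'. set tr' \<subseteq> {..<nS} \<times> {..<nA} \<and> length tr' = length tr + n}"
proof (induction n arbitrary: tr s)
  case 0 then show ?case by simp
next
  case (Suc n)
  show ?case
  proof
    fix x assume x: "x \<in> set_pmf (run_episode P nA pol (Suc n) tr s)"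
    then obtain a0 where a0: "x \<in> set_pmf (let a = (if a0 < nA then a0 else 0); tr' = tr @ [(s, a)] in
       if n = 0 then return_pmf tr'
       else bind_pmf (P s a) (\<lambda>s'. run_episode P nA pol n tr' s'))"
      by auto
    define a where "a = (if a0 < nA then a0 else 0)"
    have a: "a < nA" using nA by (simp add: a_def)
    have tr': "set (tr @ [(s,a)]) \<subseteq> {..<nS} \<times> {..<nA}" using Suc.prems a by auto
    show "x \<in> {tr'. set tr' \<subseteq> {..<nS} \<times> {..<nA} \<and> length tr' = length tr + Suc n}"
    proof (cases "n = 0")
      case True
      then show ?thesis using a0 tr' by (simp add: a_def[symmetric] Let_def)
    next
      case False
      then obtain s' where s': "s' \<in> set_pmf (P s a)" and
        x': "x \<in> set_pmf (run_episode P nA pol n (tr @ [(s,a)]) s')"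
        using a0 by (auto simp: a_def[symmetric] Let_def)
      have "s' < nS" using P[OF Suc.prems(1) a] s' by auto
      from Suc.IH[OF this tr'] x' show ?thesis by auto
    qed
  qed
qed

lemma run_support_TR:
  assumes P: "\<And>s a. s < nS \<Longrightarrow> a < nA \<Longrightarrow> set_pmf (P s a) \<subseteq> {..<nS}"
    and nA: "0 < nA" and s1: "s1 < nS"
  shows "set_pmf (run_episode P nA pol H [] s1) \<subseteq> TR nS nA H"
  using run_support[OF P nA s1, where tr="[]" and pol=pol and n=H] unfolding TR_def by auto

lemma interact_support:
  assumes P: "\<And>s a. s < nS \<Longrightarrow> a < nA \<Longrightarrow> set_pmf (P s a) \<subseteq> {..<nS}"
    and nA: "0 < nA" and s1: "s1 < nS"
  shows "set_pmf (interact P nA H s1 g Alg k) \<subseteq> HS nS nA H k"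
proof -
  have R: "\<And>pol. set_pmf (run_episode P nA pol H [] s1) \<subseteq> TR nS nA H"
    by (rule run_support_TR) (use P nA s1 in auto)
  show ?thesis
proof (induction k)
  case 0 then show ?case by (simp add: HS_def)
next
  case (Suc k)
  show ?case
  proof
    fix x assume "x \<in> set_pmf (interact P nA H s1 g Alg (Suc k))"
    then obtain h tr y where h: "h \<in> set_pmf (interact P nA H s1 g Alg k)"
      and tr: "tr \<in> set_pmf (run_episode P nA (Alg h) H [] s1)" and x: "x = h @ [(tr, y)]"
      by auto
    show "x \<in> HS nS nA H (Suc k)"
      using Suc.IH h R tr x by (auto simp: HS_def)
  qed
qed
qed

lemma kernel_supp:
  assumes "h \<in> HS nS nA H k" "set_pmf R \<subseteq> TR nS nA H"
  shows "set_pmf (bind_pmf R (\<lambda>tr. bind_pmf (B tr) (\<lambda>y. return_pmf (h @ [(tr, y)])))) \<subseteq> HS nS nA H (Suc k)"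
  using assms by (auto simp: HS_def)

lemma interact_bc:
  assumes P1: "\<And>s a. s < nS \<Longrightarrow> a < nA \<Longrightarrow> set_pmf (P1 s a) \<subseteq> {..<nS}"
    and P2: "\<And>s a. s < nS \<Longrightarrow> a < nA \<Longrightarrow> set_pmf (P2 s a) \<subseteq> {..<nS}"
    and nA: "0 < nA" and s1: "s1 < nS"
    and b1: "\<And>pol. \<beta>1 \<le> bcS (TR nS nA H) (run_episode P1 nA pol H [] s1) (run_episode P2 nA pol H [] s1)"
    and b2: "\<And>tr. tr \<in> TR nS nA H \<Longrightarrow> \<beta>2 \<le> bcS UNIV (bernoulli_pmf (g1 tr)) (bernoulli_pmf (g2 tr))"
    and bpos: "0 \<le> \<beta>1" "0 \<le> \<beta>2"
  shows "(\<beta>1 * \<beta>2) ^ k \<le> bcS (HS nS nA H k) (interact P1 nA H s1 g1 Alg k) (interact P2 nA H s1 g2 Alg k)"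
proof -
  have R1: "\<And>pol. set_pmf (run_episode P1 nA pol H [] s1) \<subseteq> TR nS nA H"
    by (rule run_support_TR) (use P1 nA s1 in auto)
  have R2: "\<And>pol. set_pmf (run_episode P2 nA pol H [] s1) \<subseteq> TR nS nA H"
    by (rule run_support_TR) (use P2 nA s1 in auto)
  have I1: "\<And>k. set_pmf (interact P1 nA H s1 g1 Alg k) \<subseteq> HS nS nA H k"
    by (rule interact_support) (use P1 nA s1 in auto)
  have I2: "\<And>k. set_pmf (interact P2 nA H s1 g2 Alg k) \<subseteq> HS nS nA H k"
    by (rule interact_support) (use P2 nA s1 in auto)
  show ?thesis
proof (induction k)
  case 0
  have "HS nS nA H 0 = {[]}" by (auto simp: HS_def)
  moreover have "bcS {[]} (return_pmf []) (return_pmf ([]::(traj \<times> bool) list)) = 1"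
    by (rule bc_self) auto
  ultimately show ?case by simp
next
  case (Suc k)
  have ker: "\<beta>1 * \<beta>2 \<le> bcS (HS nS nA H (Suc k))
      (bind_pmf (run_episode P1 nA (Alg h) H [] s1) (\<lambda>tr.
         bind_pmf (bernoulli_pmf (g1 tr)) (\<lambda>y. return_pmf (h @ [(tr, y)]))))
      (bind_pmf (run_episode P2 nA (Alg h) H [] s1) (\<lambda>tr.
         bind_pmf (bernoulli_pmf (g2 tr)) (\<lambda>y. return_pmf (h @ [(tr, y)]))))"
    if h: "h \<in> HS nS nA H k" for h
  proof -
    have inner: "\<beta>2 \<le> bcS (HS nS nA H (Suc k))
        (bind_pmf (bernoulli_pmf (g1 tr)) (\<lambda>y. return_pmf (h @ [(tr, y)])))
        (bind_pmf (bernoulli_pmf (g2 tr)) (\<lambda>y. return_pmf (h @ [(tr, y)])))"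
      if tr: "tr \<in> TR nS nA H" for tr
    proof -
      have "1 * bcS UNIV (bernoulli_pmf (g1 tr)) (bernoulli_pmf (g2 tr)) \<le> bcS (HS nS nA H (Suc k))
        (bind_pmf (bernoulli_pmf (g1 tr)) (\<lambda>y. return_pmf (h @ [(tr, y)])))
        (bind_pmf (bernoulli_pmf (g2 tr)) (\<lambda>y. return_pmf (h @ [(tr, y)])))"
      proof (rule bc_bind)
        fix y :: bool
        have "h @ [(tr, y)] \<in> HS nS nA H (Suc k)" using h tr by (auto simp: HS_def)
        thus "1 \<le> bcS (HS nS nA H (Suc k)) (return_pmf (h @ [(tr, y)])) (return_pmf (h @ [(tr, y)]))"
          using bc_self[OF finite_HS, of "return_pmf (h @ [(tr, y)])"] by simp
        show "set_pmf (return_pmf (h @ [(tr, y)])) \<subseteq> HS nS nA H (Suc k)"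
          using \<open>h @ [(tr, y)] \<in> HS nS nA H (Suc k)\<close> by simp
        thus "set_pmf (return_pmf (h @ [(tr, y)])) \<subseteq> HS nS nA H (Suc k)" .
      qed (auto simp: finite_HS)
      thus ?thesis using b2[OF tr] by simp
    qed
    have "\<beta>2 * bcS (TR nS nA H) (run_episode P1 nA (Alg h) H [] s1) (run_episode P2 nA (Alg h) H [] s1)
       \<le> bcS (HS nS nA H (Suc k))
      (bind_pmf (run_episode P1 nA (Alg h) H [] s1) (\<lambda>tr.
         bind_pmf (bernoulli_pmf (g1 tr)) (\<lambda>y. return_pmf (h @ [(tr, y)]))))
      (bind_pmf (run_episode P2 nA (Alg h) H [] s1) (\<lambda>tr.
         bind_pmf (bernoulli_pmf (g2 tr)) (\<lambda>y. return_pmf (h @ [(tr, y)]))))"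
    proof (rule bc_bind[OF finite_TR R1 R2 finite_HS])
      fix tr assume tr: "tr \<in> TR nS nA H"
      show "\<beta>2 \<le> bcS (HS nS nA H (Suc k))
        (bind_pmf (bernoulli_pmf (g1 tr)) (\<lambda>y. return_pmf (h @ [(tr, y)])))
        (bind_pmf (bernoulli_pmf (g2 tr)) (\<lambda>y. return_pmf (h @ [(tr, y)])))" by (rule inner[OF tr])
      show "set_pmf (bind_pmf (bernoulli_pmf (g1 tr)) (\<lambda>y. return_pmf (h @ [(tr, y)]))) \<subseteq> HS nS nA H (Suc k)"
        using h tr by (auto simp: HS_def)
      show "set_pmf (bind_pmf (bernoulli_pmf (g2 tr)) (\<lambda>y. return_pmf (h @ [(tr, y)]))) \<subseteq> HS nS nA H (Suc k)"
        using h tr by (auto simp: HS_def)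
    qed
    moreover have "\<beta>2 * \<beta>1 \<le> \<beta>2 * bcS (TR nS nA H) (run_episode P1 nA (Alg h) H [] s1) (run_episode P2 nA (Alg h) H [] s1)"
      by (rule mult_left_mono[OF b1 bpos(2)])
    ultimately show ?thesis by (simp add: mult.commute)
  qed
  have "(\<beta>1 * \<beta>2) * bcS (HS nS nA H k) (interact P1 nA H s1 g1 Alg k) (interact P2 nA H s1 g2 Alg k)
     \<le> bcS (HS nS nA H (Suc k)) (interact P1 nA H s1 g1 Alg (Suc k)) (interact P2 nA H s1 g2 Alg (Suc k))"
    unfolding interact.simps
  proof (rule bc_bind[OF finite_HS I1 I2 finite_HS])
    fix h assume h: "h \<in> HS nS nA H k"
    show "\<beta>1 * \<beta>2 \<le> bcS (HS nS nA H (Suc k))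
      (bind_pmf (run_episode P1 nA (Alg h) H [] s1) (\<lambda>tr.
         bind_pmf (bernoulli_pmf (g1 tr)) (\<lambda>y. return_pmf (h @ [(tr, y)]))))
      (bind_pmf (run_episode P2 nA (Alg h) H [] s1) (\<lambda>tr.
         bind_pmf (bernoulli_pmf (g2 tr)) (\<lambda>y. return_pmf (h @ [(tr, y)]))))"
      by (rule ker[OF h])
    show "set_pmf (bind_pmf (run_episode P1 nA (Alg h) H [] s1) (\<lambda>tr.
         bind_pmf (bernoulli_pmf (g1 tr)) (\<lambda>y. return_pmf (h @ [(tr, y)])))) \<subseteq> HS nS nA H (Suc k)"
      by (rule kernel_supp[OF h R1])
    show "set_pmf (bind_pmf (run_episode P2 nA (Alg h) H [] s1) (\<lambda>tr.
         bind_pmf (bernoulli_pmf (g2 tr)) (\<lambda>y. return_pmf (h @ [(tr, y)])))) \<subseteq> HS nS nA H (Suc k)"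
      by (rule kernel_supp[OF h R2])
  qed
  moreover have "(\<beta>1 * \<beta>2) ^ Suc k \<le> (\<beta>1 * \<beta>2) * bcS (HS nS nA H k) (interact P1 nA H s1 g1 Alg k) (interact P2 nA H s1 g2 Alg k)"
    using mult_left_mono[OF Suc.IH] bpos by simp
  ultimately show ?case by linarith
qed
qed

definition clampA :: "nat \<Rightarrow> nat \<Rightarrow> nat" where
  "clampA nA a0 = (if a0 < nA then a0 else 0)"

definition act :: "nat \<Rightarrow> policy \<Rightarrow> nat \<Rightarrow> nat pmf" where
  "act nA pol s1 = map_pmf (clampA nA) (pol [] s1)"

definition Xp :: "nat \<Rightarrow> nat \<Rightarrow> nat \<Rightarrow> nat \<Rightarrow> policy \<Rightarrow> real" where
  "Xp nA s1 w j pol = measure_pmf.prob (act nA pol s1) {a. bit a j \<noteq> bit w j}"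

lemma flip_lt: "(w::nat) < 2^m \<Longrightarrow> j < m \<Longrightarrow> flip_bit j w < 2^m"
proof -
  assume a: "w < 2^m" "j < m"
  have "take_bit m w = w" using a(1) by (simp add: take_bit_nat_eq_self_iff)
  hence "take_bit m (flip_bit j w) = flip_bit j w" using a(2) by (simp add: take_bit_flip_bit_eq)
  thus ?thesis by (simp only: take_bit_nat_eq_self_iff)
qed

lemma flip_flip: "flip_bit j (flip_bit j (w::nat)) = w"
  by (rule bit_eqI) (auto simp: bit_flip_bit_iff)

lemma Xp_flip: "Xp nA s1 (flip_bit j w) j pol = 1 - Xp nA s1 w j pol"
proof -
  have "{a. bit a j \<noteq> bit (flip_bit j w) j} = - {a. bit a j \<noteq> bit w j}"
    by (auto simp: bit_flip_bit_iff)
  note e = this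
  show ?thesis unfolding Xp_def e using measure_pmf.prob_compl[of "{a. bit a j \<noteq> bit w j}" "act nA pol s1"]
    by (simp add: Compl_eq_Diff_UNIV)
qed

lemma Xp_01: "0 \<le> Xp nA s1 w j pol \<and> Xp nA s1 w j pol \<le> 1"
  unfolding Xp_def by auto

lemma assouad:
  fixes Pw :: "nat \<Rightarrow> nat \<Rightarrow> nat \<Rightarrow> nat pmf" and gw :: "nat \<Rightarrow> traj \<Rightarrow> real"
    and A :: "(traj \<times> bool) list \<Rightarrow> policy" and \<gamma> \<beta>1 \<beta>2 :: real
  assumes nA: "nA = 2^m" and s1: "s1 < nS"
    and supp: "\<And>w s a. w < 2^m \<Longrightarrow> s < nS \<Longrightarrow> a < nA \<Longrightarrow> set_pmf (Pw w s a) \<subseteq> {..<nS}"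
    and b1: "\<And>w j pol. w < 2^m \<Longrightarrow> j < m \<Longrightarrow> \<beta>1 \<le> bcS (TR nS nA H)
        (run_episode (Pw w) nA pol H [] s1) (run_episode (Pw (flip_bit j w)) nA pol H [] s1)"
    and b2: "\<And>w j tr. w < 2^m \<Longrightarrow> j < m \<Longrightarrow> tr \<in> TR nS nA H \<Longrightarrow>
        \<beta>2 \<le> bcS UNIV (bernoulli_pmf (gw w tr)) (bernoulli_pmf (gw (flip_bit j w) tr))"
    and bpos: "0 \<le> \<beta>1" "0 \<le> \<beta>2" and gpos: "0 \<le> \<gamma>"
    and reg: "\<And>w pol. w < 2^m \<Longrightarrow> \<gamma> * (\<Sum>j<m. Xp nA s1 w j pol)
        \<le> opt_value (Pw w) nA H s1 (gw w) - value_of (Pw w) nA H s1 (gw w) pol"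
  shows "\<exists>w<2^m. \<gamma> * real K * real m * (\<beta>1*\<beta>2)^(2*K) / 4 \<le> expected_regret (Pw w) nA H s1 (gw w) A K"
proof -
  define W where "W = {..<(2::nat)^m}"
  define HK where "HK = HS nS nA H K"
  define p where "p w = interact (Pw w) nA H s1 (gw w) A K" for w
  define X where "X w j h k = Xp nA s1 w j (A (take k h))" for w j h k
  define F where "F w k j = (\<Sum>h\<in>HK. pmf (p w) h * X w j h k)" for w k j
  define \<rho> where "\<rho> = (\<beta>1*\<beta>2)^(2*K)"
  have nA0: "0 < nA" using nA by simp
  have finHK: "finite HK" unfolding HK_def by (rule finite_HS)
  have supW: "set_pmf (p w) \<subseteq> HK" if "w \<in> W" for w
    unfolding p_def HK_def by (rule interact_support) (use supp nA0 s1 W_def that in auto)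
  have flipW: "flip_bit j w \<in> W" if "w \<in> W" "j < m" for w j
    using flip_lt that unfolding W_def by auto
  have E: "\<gamma> * (\<Sum>k<K. \<Sum>j<m. F w k j) \<le> expected_regret (Pw w) nA H s1 (gw w) A K"
    if w: "w \<in> W" for w
  proof -
    have "(\<Sum>k<K. \<Sum>j<m. F w k j) = (\<Sum>k<K. \<Sum>h\<in>HK. \<Sum>j<m. pmf (p w) h * X w j h k)"
      unfolding F_def by (rule sum.cong[OF refl], rule sum.swap)
    also have "\<dots> = (\<Sum>h\<in>HK. \<Sum>k<K. \<Sum>j<m. pmf (p w) h * X w j h k)" by (rule sum.swap)
    also have "\<dots> = (\<Sum>h\<in>HK. pmf (p w) h * (\<Sum>k<K. \<Sum>j<m. X w j h k))"
      by (simp add: sum_distrib_left)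
    finally have "\<gamma> * (\<Sum>k<K. \<Sum>j<m. F w k j) = \<gamma> * (\<Sum>h\<in>HK. pmf (p w) h * (\<Sum>k<K. \<Sum>j<m. X w j h k))"
      by simp
    also have "\<dots> = (\<Sum>h\<in>HK. pmf (p w) h * (\<gamma> * (\<Sum>k<K. \<Sum>j<m. X w j h k)))"
      by (simp add: sum_distrib_left ac_simps)
    also have "\<dots> \<le> (\<Sum>h\<in>HK. pmf (p w) h * regret (Pw w) nA H s1 (gw w) A K h)"
    proof (rule sum_mono, rule mult_left_mono)
      fix h
      have "\<gamma> * (\<Sum>k<K. \<Sum>j<m. X w j h k) = (\<Sum>k<K. \<gamma> * (\<Sum>j<m. X w j h k))"
        by (simp add: sum_distrib_left)
      also have "\<dots> \<le> regret (Pw w) nA H s1 (gw w) A K h"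
        unfolding regret_def X_def
        by (rule sum_mono, rule reg) (use w W_def in auto)
      finally show "\<gamma> * (\<Sum>k<K. \<Sum>j<m. X w j h k) \<le> regret (Pw w) nA H s1 (gw w) A K h" .
    qed simp
    also have "\<dots> = expected_regret (Pw w) nA H s1 (gw w) A K"
      unfolding expected_regret_def p_def[symmetric]
      by (rule expectation_fin[OF finHK supW[OF w], symmetric])
    finally show ?thesis .
  qed
  have pair: "real (2^m) * \<rho> / 4 \<le> (\<Sum>w\<in>W. F w k j)" if j: "j < m" for k j
  proof -
    have each: "\<rho> / 2 \<le> F w k j + F (flip_bit j w) k j" if w: "w \<in> W" for w
    proof -
      have bc: "(\<beta>1*\<beta>2)^K \<le> bcS HK (p w) (p (flip_bit j w))"
        unfolding HK_def p_def
      proof (rule interact_bc)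
        show "\<And>s a. s < nS \<Longrightarrow> a < nA \<Longrightarrow> set_pmf (Pw w s a) \<subseteq> {..<nS}"
          using supp w W_def by auto
        show "\<And>s a. s < nS \<Longrightarrow> a < nA \<Longrightarrow> set_pmf (Pw (flip_bit j w) s a) \<subseteq> {..<nS}"
          using supp flipW[OF w j] W_def by auto
        show "\<And>pol. \<beta>1 \<le> bcS (TR nS nA H) (run_episode (Pw w) nA pol H [] s1) (run_episode (Pw (flip_bit j w)) nA pol H [] s1)"
          using b1 w j W_def by auto
        show "\<And>tr. tr \<in> TR nS nA H \<Longrightarrow> \<beta>2 \<le> bcS UNIV (bernoulli_pmf (gw w tr)) (bernoulli_pmf (gw (flip_bit j w) tr))"
          using b2 w j W_def by auto
      qed (use nA0 s1 bpos in auto)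
      have "\<rho> = ((\<beta>1*\<beta>2)^K)^2" unfolding \<rho>_def by (simp add: power_mult[symmetric] mult.commute)
      also have "\<dots> \<le> (bcS HK (p w) (p (flip_bit j w)))^2"
        by (rule power_mono[OF bc]) (use bpos in simp)
      finally have "\<rho> / 2 \<le> (bcS HK (p w) (p (flip_bit j w)))^2 / 2" by simp
      also have "\<dots> \<le> (\<Sum>h\<in>HK. pmf (p w) h * X w j h k) + (\<Sum>h\<in>HK. pmf (p (flip_bit j w)) h * (1 - X w j h k))"
        by (rule overlap[OF finHK supW[OF w] supW[OF flipW[OF w j]]]) (simp add: X_def Xp_01)
      also have "\<dots> = F w k j + F (flip_bit j w) k j"
        unfolding F_def X_def Xp_flip by simp
      finally show ?thesis .
    qed
    have bij: "bij_betw (flip_bit j) W W"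
      by (rule bij_betw_byWitness[where f'="flip_bit j"]) (auto simp: flip_flip flipW j)
    have reidx: "(\<Sum>w\<in>W. F (flip_bit j w) k j) = (\<Sum>w\<in>W. F w k j)"
      using sum.reindex_bij_betw[OF bij, of "\<lambda>w. F w k j"] by simp
    have "(\<Sum>w\<in>W. \<rho> / 2) \<le> (\<Sum>w\<in>W. F w k j + F (flip_bit j w) k j)"
      by (rule sum_mono) (rule each)
    also have "\<dots> = 2 * (\<Sum>w\<in>W. F w k j)" using reidx by (simp add: sum.distrib)
    finally show ?thesis by (simp add: W_def)
  qed
  have tot: "real (2^m) * (\<gamma> * real K * real m * \<rho> / 4) \<le> (\<Sum>w\<in>W. expected_regret (Pw w) nA H s1 (gw w) A K)"
  proof -
    have "real (2^m) * (\<gamma> * real K * real m * \<rho> / 4) = \<gamma> * (\<Sum>k<K. \<Sum>j<m. real (2^m) * \<rho> / 4)"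
      by simp
    also have "\<dots> \<le> \<gamma> * (\<Sum>k<K. \<Sum>j<m. \<Sum>w\<in>W. F w k j)"
      by (rule mult_left_mono[OF _ gpos], rule sum_mono, rule sum_mono, rule pair) auto
    also have "(\<Sum>k<K. \<Sum>j<m. \<Sum>w\<in>W. F w k j) = (\<Sum>k<K. \<Sum>w\<in>W. \<Sum>j<m. F w k j)"
      by (rule sum.cong[OF refl], rule sum.swap)
    also have "\<dots> = (\<Sum>w\<in>W. \<Sum>k<K. \<Sum>j<m. F w k j)" by (rule sum.swap)
    also have "\<gamma> * \<dots> = (\<Sum>w\<in>W. \<gamma> * (\<Sum>k<K. \<Sum>j<m. F w k j))"
      by (simp add: sum_distrib_left)
    also have "\<dots> \<le> (\<Sum>w\<in>W. expected_regret (Pw w) nA H s1 (gw w) A K)"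
      by (rule sum_mono) (rule E)
    finally show ?thesis .
  qed
  show ?thesis
  proof (rule ccontr)
    assume "\<not> ?thesis"
    hence lt: "expected_regret (Pw w) nA H s1 (gw w) A K < \<gamma> * real K * real m * \<rho> / 4" if "w \<in> W" for w
      using that unfolding W_def \<rho>_def by auto
    have "(\<Sum>w\<in>W. expected_regret (Pw w) nA H s1 (gw w) A K) < (\<Sum>w\<in>W. \<gamma> * real K * real m * \<rho> / 4)"
    proof (rule sum_strict_mono)
      show "finite W" by (simp add: W_def)
      have "(0::nat) \<in> W" by (simp add: W_def)
      thus "W \<noteq> {}" by auto
    qed (rule lt)
    also have "\<dots> = real (2^m) * (\<gamma> * real K * real m * \<rho> / 4)" by (simp add: W_def)
    finally show False using tot by simp
  qed
qed

definition sg :: "bool \<Rightarrow> real" where "sg b = (if b then 1 else -1)"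

lemma abs_sg[simp]: "\<bar>sg b\<bar> = 1" by (simp add: sg_def)
lemma sg_sq[simp]: "sg b * sg b = 1" by (simp add: sg_def)
lemma sg_prod: "sg a * sg b = 1 - 2 * (if a \<noteq> b then 1 else 0)" by (simp add: sg_def)

lemma prob_fin:
  assumes "finite S" "set_pmf M \<subseteq> S"
  shows "measure_pmf.prob M A = (\<Sum>a\<in>S. pmf M a * indicator A a)"
proof -
  have "measure_pmf.prob M A = measure_pmf.expectation M (indicator A)" by simp
  also have "\<dots> = (\<Sum>a\<in>S. pmf M a * indicator A a)" by (rule expectation_fin[OF assms])
  finally show ?thesis .
qed

lemma act_supp: "0 < nA \<Longrightarrow> set_pmf (act nA pol s) \<subseteq> {..<nA}"
  unfolding act_def clampA_def by auto

lemma value_le: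
  assumes P: "\<And>s a. s < nS \<Longrightarrow> a < nA \<Longrightarrow> set_pmf (P s a) \<subseteq> {..<nS}"
    and nA: "0 < nA" and s1: "s1 < nS" and g: "\<And>tr. tr \<in> TR nS nA H \<Longrightarrow> g tr \<le> M"
  shows "value_of P nA H s1 g pol \<le> M"
proof -
  have R: "set_pmf (run_episode P nA pol H [] s1) \<subseteq> TR nS nA H"
    by (rule run_support_TR) (use P nA s1 in auto)
  have "value_of P nA H s1 g pol = (\<Sum>tr\<in>TR nS nA H. pmf (run_episode P nA pol H [] s1) tr * g tr)"
    unfolding value_of_def by (rule expectation_fin[OF finite_TR R])
  also have "\<dots> \<le> (\<Sum>tr\<in>TR nS nA H. pmf (run_episode P nA pol H [] s1) tr * M)"
    by (rule sum_mono, rule mult_left_mono) (auto simp: g)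
  also have "\<dots> = M" using sum_pmf_eq_1[OF finite_TR R] by (simp add: sum_distrib_right[symmetric])
  finally show ?thesis .
qed

lemma opt_ge:
  assumes P: "\<And>s a. s < nS \<Longrightarrow> a < nA \<Longrightarrow> set_pmf (P s a) \<subseteq> {..<nS}"
    and nA: "0 < nA" and s1: "s1 < nS" and g: "\<And>tr. tr \<in> TR nS nA H \<Longrightarrow> g tr \<le> M"
  shows "value_of P nA H s1 g pol \<le> opt_value P nA H s1 g"
  unfolding opt_value_def
  by (rule cSUP_upper) (auto intro!: bdd_aboveI2 value_le[OF P nA s1 g])

lemma bc2_real:
  fixes p q \<delta> :: real
  assumes p: "1/4 \<le> p" "p \<le> 3/4" and q: "1/4 \<le> q" "q \<le> 3/4" and d: "\<bar>p - q\<bar> \<le> \<delta>"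
  shows "1 - \<delta>^2 \<le> sqrt (p*q) + sqrt ((1-p)*(1-q))"
proof -
  have key: "(sqrt x - sqrt y)^2 \<le> \<delta>^2" if "1/4 \<le> x" "1/4 \<le> y" "\<bar>x - y\<bar> \<le> \<delta>" for x y :: real
  proof -
    have h: "sqrt (1/4) = (1/2::real)" by (simp add: real_sqrt_divide)
    have sx: "1/2 \<le> sqrt x" using real_sqrt_le_mono[OF that(1)] h by simp
    have sy: "1/2 \<le> sqrt y" using real_sqrt_le_mono[OF that(2)] h by simp
    have "(sqrt x - sqrt y) * (sqrt x + sqrt y) = x - y"
      using that by (simp add: algebra_simps)
    hence "\<bar>sqrt x - sqrt y\<bar> * (sqrt x + sqrt y) = \<bar>x - y\<bar>"
      using sx sy by (metis abs_mult abs_of_nonneg add_nonneg_nonneg dual_order.trans linorder_linear zero_le_divide_1_iff zero_le_numeral)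
    hence "\<bar>sqrt x - sqrt y\<bar> * (sqrt x + sqrt y) \<le> \<delta>" using that by simp
    moreover have "\<bar>sqrt x - sqrt y\<bar> \<le> \<bar>sqrt x - sqrt y\<bar> * (sqrt x + sqrt y)"
      using sx sy by (simp add: mult_le_cancel_left1)
    ultimately have "\<bar>sqrt x - sqrt y\<bar> \<le> \<delta>" by linarith
    hence "\<bar>sqrt x - sqrt y\<bar>^2 \<le> \<delta>^2" by (rule power_mono) simp
    thus ?thesis by simp
  qed
  have k1: "(sqrt p - sqrt q)^2 \<le> \<delta>^2" using key p q d by auto
  have k2: "(sqrt (1-p) - sqrt (1-q))^2 \<le> \<delta>^2" using key[of "1-p" "1-q"] p q d by auto
  have ab: "sqrt (x*y) = (x + y - (sqrt x - sqrt y)^2) / 2" if "0 \<le> x" "0 \<le> y" for x y :: real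
  proof -
    have "(sqrt x - sqrt y)^2 = x + y - 2 * (sqrt x * sqrt y)"
      using that by (simp add: power2_diff)
    thus ?thesis by (simp add: real_sqrt_mult)
  qed
  have e1: "sqrt (p*q) = (p + q - (sqrt p - sqrt q)^2) / 2"
    by (rule ab) (use p q in auto)
  have e2: "sqrt ((1-p)*(1-q)) = ((1-p) + (1-q) - (sqrt (1-p) - sqrt (1-q))^2) / 2"
    by (rule ab) (use p q in auto)
  show ?thesis unfolding e1 e2 using k1 k2 by (simp add: field_simps)
qed

lemma bcS_bool: "bcS UNIV p q = sqrt (pmf p True * pmf q True) + sqrt (pmf p False * pmf q False)"
  unfolding bcS_def by (simp add: UNIV_bool)

lemma bern_bc:
  fixes p q \<delta> :: real
  assumes "1/4 \<le> p" "p \<le> 3/4" "1/4 \<le> q" "q \<le> 3/4" "\<bar>p - q\<bar> \<le> \<delta>"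
  shows "1 - \<delta>^2 \<le> bcS UNIV (bernoulli_pmf p) (bernoulli_pmf q)"
  unfolding bcS_bool using bc2_real[OF assms] assms by simp

lemma run1: "run_episode P nA pol (Suc 0) tr s = map_pmf (\<lambda>a. tr @ [(s,a)]) (map_pmf (clampA nA) (pol tr s))"
  by (simp add: map_pmf_def bind_assoc_pmf bind_return_pmf clampA_def Let_def)

lemma Bern_half:
  assumes "0 < K"
  shows "1/2 \<le> (1 - 1 / (4 * real K)) ^ (2*K)"
proof -
  have "-1 \<le> - 1 / (4 * real K)" using assms by (simp add: field_simps)
  from Bernoulli_inequality[OF this, of "2*K"]
  have "1 + real (2*K) * (- 1 / (4 * real K)) \<le> (1 - 1 / (4 * real K)) ^ (2*K)" by simp
  moreover have "1 + real (2*K) * (- 1 / (4 * real K)) = 1/2" using assms by (simp add: field_simps)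
  ultimately show ?thesis by simp
qed

lemma vnorm_unit: "0 < d \<Longrightarrow> vnorm d (\<lambda>i. if i = 0 then c else 0) = \<bar>c\<bar>"
proof -
  assume "0 < d"
  have "(\<Sum>i<d. (if i = 0 then c else 0)^2) = (\<Sum>i<d. if i = 0 then c^2 else 0)"
    by (rule sum.cong) auto
  also have "\<dots> = c^2" using \<open>0 < d\<close> by (simp add: sum.delta)
  finally have "(\<Sum>i<d. (if i = 0 then c else 0)^2) = c^2" .
  thus ?thesis unfolding vnorm_def by simp
qed

definition Ssum :: "nat \<Rightarrow> nat \<Rightarrow> nat \<Rightarrow> real" where
  "Ssum m w a = (\<Sum>i<m. sg (bit a i) * sg (bit w i))"

lemma Ssum_bound: "\<bar>Ssum m w a\<bar> \<le> real m"
proof -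
  have "\<bar>Ssum m w a\<bar> \<le> (\<Sum>i<m. \<bar>sg (bit a i) * sg (bit w i)\<bar>)"
    unfolding Ssum_def by (rule sum_abs)
  also have "\<dots> = real m" by (simp add: abs_mult)
  finally show ?thesis .
qed

lemma Ssum_gap: "Ssum m w w - Ssum m w a = 2 * (\<Sum>i<m. (if bit a i \<noteq> bit w i then 1 else 0))"
  unfolding Ssum_def sg_prod by (simp add: sum_subtractf sum_distrib_left)

lemma Ssum_flip: "\<bar>Ssum m w a - Ssum m (flip_bit j w) a\<bar> \<le> 2"
proof -
  have "\<bar>Ssum m w a - Ssum m (flip_bit j w) a\<bar>
      \<le> (\<Sum>i<m. \<bar>sg (bit a i) * sg (bit w i) - sg (bit a i) * sg (bit (flip_bit j w) i)\<bar>)"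
    unfolding Ssum_def sum_subtractf[symmetric] by (rule sum_abs)
  also have "\<dots> \<le> (\<Sum>i<m. (if i = j then 2 else 0))"
    by (rule sum_mono) (auto simp: bit_flip_bit_iff sg_def)
  also have "\<dots> \<le> 2" by (simp add: sum.delta)
  finally show ?thesis .
qed

definition phiF :: "traj \<Rightarrow> nat \<Rightarrow> real" where
  "phiF tr i = (if i = 0 then 1/2 else sg (bit (snd (hd tr)) (i - 1)))"
definition wF :: "real \<Rightarrow> nat \<Rightarrow> nat \<Rightarrow> real" where
  "wF \<epsilon> w i = (if i = 0 then 1 else \<epsilon> * sg (bit w (i - 1)))"
definition P0 :: "nat \<Rightarrow> nat \<Rightarrow> nat pmf" where "P0 s a = return_pmf 0"
definition psi0 :: "nat \<Rightarrow> nat \<Rightarrow> nat \<Rightarrow> nat \<Rightarrow> real" where "psi0 s a s' i = (if i = 0 then 1 else 0)"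
definition th0 :: "nat \<Rightarrow> real" where "th0 i = (if i = 0 then 1 else 0)"

lemma gF_eq: "lin_feedback (Suc m) phiF (wF \<epsilon> w) tr = 1/2 + \<epsilon> * Ssum m w (snd (hd tr))"
  unfolding lin_feedback_def Ssum_def sum.lessThan_Suc_shift
  by (simp add: phiF_def wF_def sum_distrib_left ac_simps)

lemma sum_delta0: "0 < (d::nat) \<Longrightarrow> (\<Sum>i<d. (if i = 0 then c else 0)) = (c::real)"
  by (simp add: sum.delta)

lemma lm0:
  assumes "0 < dP" "1 \<le> B"
  shows "linear_mixture dP 1 nA psi0 th0 P0 B"
proof -
  have a: "pmf (P0 s a) 0 = (\<Sum>i<dP. psi0 s a 0 i * th0 i)" for s a
  proof -
    have "(\<Sum>i<dP. psi0 s a 0 i * th0 i) = (\<Sum>i<dP. (if i = 0 then 1 else 0))"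
      by (rule sum.cong) (auto simp: psi0_def th0_def)
    also have "\<dots> = 1" using sum_delta0[OF assms(1)] by simp
    finally show ?thesis by (simp add: P0_def)
  qed
  have b: "vnorm dP (\<lambda>i. \<Sum>s'<1. psi0 s a s' i * V s') \<le> 1" if "0 \<le> V 0" "V 0 \<le> 1" for s a V
  proof -
    have "(\<lambda>i. \<Sum>s'<1. psi0 s a s' i * V s') = (\<lambda>i. if i = 0 then V 0 else 0)"
      by (auto simp: psi0_def)
    thus ?thesis using vnorm_unit[OF assms(1), of "V 0"] that by simp
  qed
  have c: "vnorm dP th0 \<le> B"
    using vnorm_unit[OF assms(1), of 1] assms(2) by (simp add: th0_def[abs_def])
  show ?thesis unfolding linear_mixture_def using a b c by (auto simp: P0_def)
qed

lemma feedback_case: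
  fixes Alg :: algorithm
  assumes K: "0 < K" and mK: "real m * real m \<le> real K" and B: "2 \<le> B" and dP: "0 < dP"
  shows "\<exists>nS nA H s1 psi theta P phi w. 0 < nS \<and> 0 < nA \<and> 0 < H \<and> s1 < nS \<and>
       linear_mixture dP nS nA psi theta P B \<and> linear_feedback (Suc m) nS nA H phi w B \<and>
       real m * sqrt (real K) / 16 \<le> expected_regret P nA H s1 (lin_feedback (Suc m) phi w)
         (Alg (dP, Suc m, nS, nA, H, s1, psi, phi)) K"
proof -
  define \<epsilon> where "\<epsilon> = 1 / (4 * sqrt (real K))"
  define nA where "nA = (2::nat)^m"
  define A where "A = Alg (dP, Suc m, 1, nA, 1, 0, psi0, phiF)"
  define gw where "gw w = lin_feedback (Suc m) phiF (wF \<epsilon> w)" for w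
  have sK: "0 < sqrt (real K)" using K by simp
  have eps: "0 < \<epsilon>" using K by (simp add: \<epsilon>_def)
  have msK: "real m \<le> sqrt (real K)" using mK by (simp add: real_le_rsqrt power2_eq_square)
  have meps: "real m * \<epsilon> \<le> 1/4" using msK sK by (simp add: \<epsilon>_def field_simps)
  have eps4: "\<epsilon> \<le> 1/4"
  proof -
    have "1 \<le> sqrt (real K)" using K by simp
    thus ?thesis by (simp add: \<epsilon>_def field_simps)
  qed
  have g_eq: "gw w tr = 1/2 + \<epsilon> * Ssum m w (snd (hd tr))" for w tr
    unfolding gw_def by (rule gF_eq)
  have g_rng: "1/4 \<le> gw w tr \<and> gw w tr \<le> 3/4" for w tr
  proof -
    have "\<bar>\<epsilon> * Ssum m w (snd (hd tr))\<bar> \<le> \<epsilon> * real m"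
      using Ssum_bound[of m w "snd (hd tr)"] eps by (simp add: abs_mult mult_left_mono)
    thus ?thesis unfolding g_eq using meps by (simp add: abs_le_iff mult.commute)
  qed
  have nA0: "0 < nA" by (simp add: nA_def)
  have supp: "\<And>s a. s < 1 \<Longrightarrow> a < nA \<Longrightarrow> set_pmf (P0 s a) \<subseteq> {..<1}" by (simp add: P0_def)
  have runv: "run_episode P0 nA pol 1 [] 0 = map_pmf (\<lambda>a. [(0,a)]) (act nA pol 0)" for pol
    by (simp only: One_nat_def run1 act_def append_Nil)
  have val: "value_of P0 nA 1 0 (gw w) pol = (\<Sum>a<nA. pmf (act nA pol 0) a * gw w [(0,a)])" for w pol
    unfolding value_of_def runv integral_map_pmf
    by (rule expectation_fin[OF _ act_supp[OF nA0]]) simp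
  have "\<exists>w<2^m. (1 / (2 * sqrt (real K))) * real K * real m * (1 * (1 - 1 / (4 * real K)))^(2*K) / 4
     \<le> expected_regret ((\<lambda>_. P0) w) nA 1 0 (gw w) A K"
  proof (rule assouad[where nS=1])
    show "nA = 2^m" by (simp add: nA_def)
    show "0 < (1::nat)" by simp
    show "\<And>w s a. w < 2^m \<Longrightarrow> s < 1 \<Longrightarrow> a < nA \<Longrightarrow> set_pmf (P0 s a) \<subseteq> {..<1}" by (simp add: P0_def)
    show "0 \<le> (1::real)" by simp
    show "0 \<le> 1 - 1 / (4 * real K)" using K by (simp add: field_simps)
    show "0 \<le> 1 / (2 * sqrt (real K))" by simp
    fix w j :: nat and pol :: policy assume w: "w < 2^m"
    show "1 \<le> bcS (TR 1 nA 1) (run_episode P0 nA pol 1 [] 0) (run_episode P0 nA pol 1 [] 0)"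
    proof -
      have RS: "set_pmf (run_episode P0 nA pol 1 [] 0) \<subseteq> TR 1 nA 1"
        by (rule run_support_TR) (use supp nA0 in auto)
      show ?thesis using bc_self[OF finite_TR RS] by simp
    qed
    show "1 - 1 / (4 * real K) \<le> bcS UNIV (bernoulli_pmf (gw w tr)) (bernoulli_pmf (gw (flip_bit j w) tr))"
      for tr
    proof -
      have "\<bar>gw w tr - gw (flip_bit j w) tr\<bar> = \<epsilon> * \<bar>Ssum m w (snd (hd tr)) - Ssum m (flip_bit j w) (snd (hd tr))\<bar>"
        unfolding g_eq using eps by (simp add: abs_mult right_diff_distrib[symmetric])
      also have "\<dots> \<le> \<epsilon> * 2" using Ssum_flip eps by (simp add: mult_left_mono)
      finally have d: "\<bar>gw w tr - gw (flip_bit j w) tr\<bar> \<le> 2 * \<epsilon>" by simp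
      have "1 - (2*\<epsilon>)^2 \<le> bcS UNIV (bernoulli_pmf (gw w tr)) (bernoulli_pmf (gw (flip_bit j w) tr))"
        by (rule bern_bc) (use g_rng d in auto)
      moreover have "(2*\<epsilon>)^2 = 1 / (4 * real K)"
        using K by (simp add: \<epsilon>_def power2_eq_square field_simps)
      ultimately show ?thesis by simp
    qed
    show "1 / (2 * sqrt (real K)) * (\<Sum>j<m. Xp nA 0 w j pol)
        \<le> opt_value P0 nA 1 0 (gw w) - value_of P0 nA 1 0 (gw w) pol"
    proof -
      define ac where "ac = act nA pol 0"
      have acs: "set_pmf ac \<subseteq> {..<nA}" unfolding ac_def by (rule act_supp[OF nA0])
      have wA: "w < nA" using w by (simp add: nA_def)
      have "value_of P0 nA 1 0 (gw w) (\<lambda>_ _. return_pmf w) = gw w [(0,w)]"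
        unfolding value_of_def runv using wA by (simp add: act_def clampA_def)
      moreover have "value_of P0 nA 1 0 (gw w) (\<lambda>_ _. return_pmf w) \<le> opt_value P0 nA 1 0 (gw w)"
        by (rule opt_ge[where nS=1 and M="3/4"]) (use supp nA0 g_rng in auto)
      ultimately have opt: "gw w [(0,w)] \<le> opt_value P0 nA 1 0 (gw w)" by simp
      have X: "Xp nA 0 w j pol = (\<Sum>a<nA. pmf ac a * (if bit a j \<noteq> bit w j then 1 else 0))" for j
        unfolding Xp_def ac_def[symmetric] prob_fin[OF finite_lessThan acs] indicator_def by (intro sum.cong refl) simp
      have "1 / (2 * sqrt (real K)) * (\<Sum>j<m. Xp nA 0 w j pol)
          = (\<Sum>a<nA. pmf ac a * (\<epsilon> * (2 * (\<Sum>j<m. (if bit a j \<noteq> bit w j then 1 else 0)))))"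
        unfolding X \<epsilon>_def
        by (subst sum.swap) (simp add: sum_distrib_left sum_distrib_right ac_simps)
      also have "\<dots> = (\<Sum>a<nA. pmf ac a * (gw w [(0,w)] - gw w [(0,a)]))"
      proof (rule sum.cong[OF refl])
        fix a
        have "gw w [(0,w)] - gw w [(0,a)] = \<epsilon> * (Ssum m w w - Ssum m w a)"
          by (simp add: g_eq right_diff_distrib)
        also have "\<dots> = \<epsilon> * (2 * (\<Sum>j<m. (if bit a j \<noteq> bit w j then 1 else 0)))"
          by (simp only: Ssum_gap)
        finally show "pmf ac a * (\<epsilon> * (2 * (\<Sum>j<m. (if bit a j \<noteq> bit w j then 1 else 0))))
            = pmf ac a * (gw w [(0,w)] - gw w [(0,a)])" by simp
      qed
      also have "\<dots> = gw w [(0,w)] - value_of P0 nA 1 0 (gw w) pol"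
        unfolding val ac_def[symmetric]
        using sum_pmf_eq_1[OF _ acs]
        by (simp add: right_diff_distrib sum_subtractf sum_distrib_right[symmetric])
      finally show ?thesis using opt by simp
    qed
  qed
  then obtain w where w: "w < 2^m" and
    reg: "(1 / (2 * sqrt (real K))) * real K * real m * (1 * (1 - 1 / (4 * real K)))^(2*K) / 4
     \<le> expected_regret P0 nA 1 0 (gw w) A K" by auto
  have "real m * sqrt (real K) / 16 = ((1 / (2 * sqrt (real K))) * real K * real m / 4) * (1/2)"
    using sK by (simp add: field_simps)
  also have "\<dots> \<le> ((1 / (2 * sqrt (real K))) * real K * real m / 4) * (1 * (1 - 1 / (4 * real K)))^(2*K)"
    by (rule mult_left_mono) (use Bern_half[OF K] in auto)
  also have "\<dots> = (1 / (2 * sqrt (real K))) * real K * real m * (1 * (1 - 1 / (4 * real K)))^(2*K) / 4"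
    by simp
  finally have R: "real m * sqrt (real K) / 16 \<le> expected_regret P0 nA 1 0 (gw w) A K"
    using reg by linarith
  have lf: "linear_feedback (Suc m) 1 nA 1 phiF (wF \<epsilon> w) B"
  proof -
    have "(\<Sum>i<Suc m. (wF \<epsilon> w i)^2) = 1 + real m * \<epsilon>^2"
    proof -
      have sq: "(sg b)^2 = 1" for b by (simp add: sg_def)
      show ?thesis unfolding sum.lessThan_Suc_shift by (simp add: wF_def power_mult_distrib sq)
    qed
    also have "\<dots> \<le> 4"
    proof -
      have "real m * \<epsilon>^2 = (real m * \<epsilon>) * \<epsilon>" by (simp add: power2_eq_square)
      also have "\<dots> \<le> (1/4) * (1/4)" using meps eps4 eps by (intro mult_mono) auto
      finally show ?thesis by simp
    qed
    finally have "vnorm (Suc m) (wF \<epsilon> w) \<le> sqrt 4"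
      unfolding vnorm_def by (rule real_sqrt_le_mono)
    moreover have "sqrt (4::real) = 2" by (rule real_sqrt_unique) auto
    ultimately have "vnorm (Suc m) (wF \<epsilon> w) \<le> 2" by simp
    thus ?thesis unfolding linear_feedback_def using g_rng B unfolding gw_def
      by (auto intro: order_trans[of _ "1/4"] order_trans[of _ "3/4"])
  qed
  show ?thesis
    apply (rule exI[of _ 1], rule exI[of _ nA], rule exI[of _ 1], rule exI[of _ 0],
           rule exI[of _ psi0], rule exI[of _ th0], rule exI[of _ P0], rule exI[of _ phiF], rule exI[of _ "wF \<epsilon> w"])
    using nA0 lm0[OF dP] B lf R unfolding A_def gw_def by auto
qed

lemma sum_delta0T: "0 < (d::nat) \<Longrightarrow> (\<Sum>i<d. (if i = 0 then c else 0)) = (c::real)"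
  by (simp add: sum.delta)

lemma exp_bind_fin:
  fixes g :: "'b \<Rightarrow> real"
  assumes S: "finite S" "set_pmf p \<subseteq> S" and T: "finite T" and f: "\<And>x. x \<in> S \<Longrightarrow> set_pmf (f x) \<subseteq> T"
  shows "measure_pmf.expectation (bind_pmf p f) g = (\<Sum>x\<in>S. pmf p x * measure_pmf.expectation (f x) g)"
proof -
  have sb: "set_pmf (bind_pmf p f) \<subseteq> T" using S f by auto
  have "measure_pmf.expectation (bind_pmf p f) g = (\<Sum>z\<in>T. pmf (bind_pmf p f) z * g z)"
    by (rule expectation_fin[OF T sb])
  also have "\<dots> = (\<Sum>z\<in>T. \<Sum>x\<in>S. pmf p x * (pmf (f x) z * g z))"
    by (simp add: pmf_bind_fin[OF S] sum_distrib_right sum_distrib_left ac_simps)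
  also have "\<dots> = (\<Sum>x\<in>S. pmf p x * (\<Sum>z\<in>T. pmf (f x) z * g z))"
    by (subst sum.swap) (simp add: sum_distrib_left)
  also have "\<dots> = (\<Sum>x\<in>S. pmf p x * measure_pmf.expectation (f x) g)"
  proof (rule sum.cong[OF refl])
    fix x assume "x \<in> S"
    thus "pmf p x * (\<Sum>z\<in>T. pmf (f x) z * g z) = pmf p x * measure_pmf.expectation (f x) g"
      using expectation_fin[OF T f] by simp
  qed
  finally show ?thesis .
qed

lemma reg_lemma:
  assumes nA: "nA = 2^m" and w: "w < 2^m" and c: "0 \<le> c"
    and val: "\<And>pol. value_of P nA H s1 g pol = measure_pmf.expectation (act nA pol s1) (\<lambda>a. 1/2 + c * Ssum m w a)"
    and optb: "\<And>pol. value_of P nA H s1 g pol \<le> opt_value P nA H s1 g"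
  shows "2*c * (\<Sum>j<m. Xp nA s1 w j pol) \<le> opt_value P nA H s1 g - value_of P nA H s1 g pol"
proof -
  define ac where "ac = act nA pol s1"
  have nA0: "0 < nA" using nA by simp
  have acs: "set_pmf ac \<subseteq> {..<nA}" unfolding ac_def by (rule act_supp[OF nA0])
  have wA: "w < nA" using w nA by simp
  have "value_of P nA H s1 g (\<lambda>_ _. return_pmf w) = 1/2 + c * Ssum m w w"
    unfolding val using wA by (simp add: act_def clampA_def)
  with optb[of "\<lambda>_ _. return_pmf w"] have opt: "1/2 + c * Ssum m w w \<le> opt_value P nA H s1 g" by simp
  have X: "Xp nA s1 w j pol = (\<Sum>a<nA. pmf ac a * (if bit a j \<noteq> bit w j then 1 else 0))" for j
    unfolding Xp_def ac_def[symmetric] prob_fin[OF finite_lessThan acs] indicator_def by (intro sum.cong refl) simp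
  have "2*c * (\<Sum>j<m. Xp nA s1 w j pol)
      = (\<Sum>a<nA. pmf ac a * (c * (2 * (\<Sum>j<m. (if bit a j \<noteq> bit w j then 1 else 0)))))"
    unfolding X by (subst sum.swap) (simp add: sum_distrib_left sum_distrib_right ac_simps)
  also have "\<dots> = (\<Sum>a<nA. pmf ac a * ((1/2 + c * Ssum m w w) - (1/2 + c * Ssum m w a)))"
  proof (rule sum.cong[OF refl])
    fix a
    have "(1/2 + c * Ssum m w w) - (1/2 + c * Ssum m w a) = c * (Ssum m w w - Ssum m w a)"
      by (simp add: right_diff_distrib)
    also have "\<dots> = c * (2 * (\<Sum>j<m. (if bit a j \<noteq> bit w j then 1 else 0)))"
      by (simp only: Ssum_gap)
    finally show "pmf ac a * (c * (2 * (\<Sum>j<m. (if bit a j \<noteq> bit w j then 1 else 0))))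
        = pmf ac a * ((1/2 + c * Ssum m w w) - (1/2 + c * Ssum m w a))" by simp
  qed
  also have "\<dots> = (\<Sum>a<nA. pmf ac a * (c * Ssum m w w)) - (\<Sum>a<nA. pmf ac a * (c * Ssum m w a))"
    by (simp add: right_diff_distrib sum_subtractf)
  also have "(\<Sum>a<nA. pmf ac a * (c * Ssum m w w)) = c * Ssum m w w"
    using sum_pmf_eq_1[OF _ acs] by (simp add: sum_distrib_right[symmetric])
  also have "(\<Sum>a<nA. pmf ac a * (c * Ssum m w a)) = value_of P nA H s1 g pol - 1/2"
  proof -
    have "value_of P nA H s1 g pol = (\<Sum>a<nA. pmf ac a * (1/2 + c * Ssum m w a))"
      unfolding val ac_def[symmetric] by (rule expectation_fin[OF finite_lessThan acs])
    also have "\<dots> = (\<Sum>a<nA. pmf ac a) * (1/2) + (\<Sum>a<nA. pmf ac a * (c * Ssum m w a))"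
      by (simp add: distrib_left sum.distrib sum_distrib_right)
    finally show ?thesis using sum_pmf_eq_1[OF _ acs] by simp
  qed
  finally show ?thesis using opt by linarith
qed

definition qT :: "real \<Rightarrow> nat \<Rightarrow> nat \<Rightarrow> nat \<Rightarrow> real" where
  "qT c m w a = 1/2 + c * Ssum m w a"
definition bn :: "bool \<Rightarrow> nat" where "bn b = (if b then 1 else 0)"
definition PT :: "real \<Rightarrow> nat \<Rightarrow> nat \<Rightarrow> nat \<Rightarrow> nat \<Rightarrow> nat pmf" where
  "PT c m w s a = map_pmf bn (bernoulli_pmf (qT c m w a))"
definition psiT :: "real \<Rightarrow> nat \<Rightarrow> nat \<Rightarrow> nat \<Rightarrow> nat \<Rightarrow> real" where
  "psiT \<kappa> s a s' i = (if i = 0 then (if s' < 2 then 1/2 else 0)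
      else \<kappa> * sg (bit a (i - 1)) * (if s' = 1 then 1 else if s' = 0 then -1 else 0))"
definition thT :: "real \<Rightarrow> nat \<Rightarrow> nat \<Rightarrow> real" where
  "thT \<epsilon> w i = (if i = 0 then 1 else \<epsilon> * sg (bit w (i - 1)))"
definition phiT :: "traj \<Rightarrow> nat \<Rightarrow> real" where
  "phiT tr i = (if i = 0 then (if fst (tr ! 1) = 1 then 1 else 0) else 0)"
definition wT :: "nat \<Rightarrow> real" where "wT i = (if i = 0 then 1 else 0)"

lemma pmf_PT:
  assumes "0 \<le> qT c m w a" "qT c m w a \<le> 1"
  shows "pmf (PT c m w s a) 1 = qT c m w a" "pmf (PT c m w s a) 0 = 1 - qT c m w a"
proof -
  have "bn -` {1} = {True}" "bn -` {0} = {False}" by (auto simp: bn_def split: if_splits)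
  thus "pmf (PT c m w s a) 1 = qT c m w a" "pmf (PT c m w s a) 0 = 1 - qT c m w a"
    unfolding PT_def pmf_map using assms by (simp_all add: measure_pmf_single)
qed

lemma set_PT: "set_pmf (PT c m w s a) \<subseteq> {..<2}"
  unfolding PT_def bn_def by auto

lemma run2: "run_episode P nA pol (Suc (Suc 0)) tr s =
   bind_pmf (map_pmf (clampA nA) (pol tr s)) (\<lambda>a. bind_pmf (P s a) (\<lambda>s'.
     map_pmf (\<lambda>a'. tr @ [(s,a), (s',a')]) (map_pmf (clampA nA) (pol (tr @ [(s,a)]) s'))))"
proof -
  have r1: "run_episode P nA pol (Suc 0) tr' = (\<lambda>s. bind_pmf (pol tr' s) (\<lambda>a0. return_pmf (tr' @ [(s, if a0 < nA then a0 else 0)])))" for tr'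
    by (rule ext) simp
  show ?thesis
    by (simp add: r1 bind_map_pmf map_pmf_def bind_assoc_pmf bind_return_pmf clampA_def Let_def)
qed

lemma sum2: "(\<Sum>s'<(2::nat). f s') = f 0 + (f 1 :: real)"
  by (simp add: numeral_2_eq_2)

lemma psum:
  assumes "s' < 2"
  shows "(\<Sum>i<Suc m. psiT \<kappa> s a s' i * thT \<epsilon> w i) = 1/2 + (if s' = 1 then 1 else -1) * (\<kappa> * \<epsilon>) * Ssum m w a"
proof -
  have "(\<Sum>i<Suc m. psiT \<kappa> s a s' i * thT \<epsilon> w i)
      = 1/2 + (\<Sum>i<m. (if s' = 1 then 1 else -1) * (\<kappa> * \<epsilon>) * (sg (bit a i) * sg (bit w i)))"
    unfolding sum.lessThan_Suc_shift using assms
    by (auto simp: psiT_def thT_def intro!: sum.cong)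
  thus ?thesis unfolding Ssum_def by (simp add: sum_distrib_left)
qed

lemma vec_norm:
  fixes V :: "nat \<Rightarrow> real"
  assumes V: "0 \<le> V 0" "V 0 \<le> 1" "0 \<le> V 1" "V 1 \<le> 1" and m: "0 < m"
    and k: "\<kappa> = 1 / (2 * sqrt (real m))"
  shows "vnorm (Suc m) (\<lambda>i. \<Sum>s'<2. psiT \<kappa> s a s' i * V s') \<le> 1"
proof -
  have k2: "real m * \<kappa>^2 = 1/4" using m unfolding k by (simp add: power_divide power_mult_distrib)
  have sq: "(sg b)^2 = 1" for b by (simp add: sg_def)
  have "(\<Sum>i<Suc m. (\<Sum>s'<2. psiT \<kappa> s a s' i * V s')^2)
      = ((V 0 + V 1) / 2)^2 + (\<Sum>i<m. \<kappa>^2 * (V 1 - V 0)^2)"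
    unfolding sum.lessThan_Suc_shift sum2
    by (simp add: psiT_def power_mult_distrib sq algebra_simps power2_eq_square)
  also have "\<dots> = ((V 0 + V 1) / 2)^2 + (real m * \<kappa>^2) * (V 1 - V 0)^2" by simp
  also have "\<dots> = ((V 0)^2 + (V 1)^2) / 2" unfolding k2 by (simp add: power2_eq_square field_simps)
  also have "\<dots> \<le> 1"
  proof -
    have "(V 0)^2 \<le> 1" "(V 1)^2 \<le> 1" using V by (simp_all add: power_le_one)
    thus ?thesis by simp
  qed
  finally show ?thesis unfolding vnorm_def by simp
qed

lemma transition_case:
  fixes Alg :: algorithm
  assumes K: "0 < K" and m: "0 < m" and mK: "real m * real m \<le> real K" and B: "2 \<le> B" and dG: "0 < dG"
  shows "\<exists>nS nA H s1 psi theta P phi w. 0 < nS \<and> 0 < nA \<and> 0 < H \<and> s1 < nS \<and>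
       linear_mixture (Suc m) nS nA psi theta P B \<and> linear_feedback dG nS nA H phi w B \<and>
       real m * sqrt (real K) / 16 \<le> expected_regret P nA H s1 (lin_feedback dG phi w)
         (Alg (Suc m, dG, nS, nA, H, s1, psi, phi)) K"
proof -
  define c where "c = 1 / (4 * sqrt (real K))"
  define \<kappa> where "\<kappa> = 1 / (2 * sqrt (real m))"
  define \<epsilon> where "\<epsilon> = sqrt (real m) / (2 * sqrt (real K))"
  define nA where "nA = (2::nat)^m"
  define A where "A = Alg (Suc m, dG, 2, nA, 2, 0, psiT \<kappa>, phiT)"
  define g where "g = lin_feedback dG phiT wT"
  define Pw where "Pw w = PT c m w" for w
  have sK: "0 < sqrt (real K)" using K by simp
  have sm: "0 < sqrt (real m)" using m by simp
  have ke: "\<kappa> * \<epsilon> = c" unfolding \<kappa>_def \<epsilon>_def c_def using sm sK by (simp add: field_simps)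
  have msK: "real m \<le> sqrt (real K)" using mK by (simp add: real_le_rsqrt power2_eq_square)
  have cm: "c * real m \<le> 1/4" using msK sK by (simp add: c_def field_simps)
  have c0: "0 \<le> c" by (simp add: c_def)
  have q_rng: "1/4 \<le> qT c m w a \<and> qT c m w a \<le> 3/4" for w a
  proof -
    have "\<bar>c * Ssum m w a\<bar> \<le> c * real m"
      using Ssum_bound[of m w a] c0 by (simp add: abs_mult mult_left_mono)
    thus ?thesis unfolding qT_def using cm by (simp add: abs_le_iff)
  qed
  have g_eq: "g tr = (if fst (tr ! 1) = 1 then 1 else 0)" for tr
  proof -
    have "g tr = (\<Sum>i<dG. (if i = 0 then (if fst (tr ! 1) = 1 then 1 else 0) else 0))"
      unfolding g_def lin_feedback_def by (rule sum.cong) (auto simp: phiT_def wT_def)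
    thus ?thesis using sum_delta0T[OF dG] by simp
  qed
  have nA0: "0 < nA" by (simp add: nA_def)
  have supp: "\<And>w s a. s < 2 \<Longrightarrow> a < nA \<Longrightarrow> set_pmf (Pw w s a) \<subseteq> {..<2}"
    by (simp add: Pw_def set_PT)
  define M where "M pol a s' = map_pmf (\<lambda>a'. [(0,a), (s',a')]) (map_pmf (clampA nA) (pol [(0,a)] s'))"
    for pol :: policy and a s'
  have runE: "run_episode (Pw w) nA pol 2 [] 0 = bind_pmf (act nA pol 0) (\<lambda>a. bind_pmf (Pw w 0 a) (M pol a))"
    for w pol unfolding numeral_2_eq_2 run2 act_def M_def by simp
  have Msupp: "set_pmf (M pol a s') \<subseteq> TR 2 nA 2" if "a < nA" "s' < 2" for pol a s'
    using that nA0 unfolding M_def TR_def clampA_def by auto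
  have Bsupp: "set_pmf (bind_pmf (Pw w 0 a) (M pol a)) \<subseteq> TR 2 nA 2" if "a < nA" for w pol a
    using Msupp[OF that] supp[of 0 a w] that by fastforce
  have val: "value_of (Pw w) nA 2 0 g pol = measure_pmf.expectation (act nA pol 0) (\<lambda>a. 1/2 + c * Ssum m w a)"
    for w pol
  proof -
    have inner: "measure_pmf.expectation (bind_pmf (Pw w 0 a) (M pol a)) g = 1/2 + c * Ssum m w a"
      if a: "a < nA" for a
    proof -
      have "measure_pmf.expectation (bind_pmf (Pw w 0 a) (M pol a)) g
          = (\<Sum>s'<2. pmf (Pw w 0 a) s' * measure_pmf.expectation (M pol a s') g)"
        by (rule exp_bind_fin[OF finite_lessThan supp finite_TR Msupp]) (use a in auto)
      also have "\<dots> = (\<Sum>s'<2. pmf (Pw w 0 a) s' * (if s' = 1 then 1 else 0))"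
        by (rule sum.cong[OF refl]) (simp add: M_def g_eq)
      also have "\<dots> = pmf (Pw w 0 a) 1" by (simp add: sum2)
      also have "\<dots> = qT c m w a" unfolding Pw_def by (rule pmf_PT(1)) (use q_rng[of w a] in auto)
      finally show ?thesis by (simp add: qT_def)
    qed
    have "value_of (Pw w) nA 2 0 g pol = (\<Sum>a<nA. pmf (act nA pol 0) a * measure_pmf.expectation (bind_pmf (Pw w 0 a) (M pol a)) g)"
      unfolding value_of_def runE
      by (rule exp_bind_fin[OF finite_lessThan act_supp[OF nA0] finite_TR Bsupp]) auto
    also have "\<dots> = (\<Sum>a<nA. pmf (act nA pol 0) a * (1/2 + c * Ssum m w a))"
      by (rule sum.cong[OF refl]) (simp add: inner)
    also have "\<dots> = measure_pmf.expectation (act nA pol 0) (\<lambda>a. 1/2 + c * Ssum m w a)"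
      by (rule expectation_fin[OF finite_lessThan act_supp[OF nA0], symmetric])
    finally show ?thesis .
  qed
  have g01: "0 \<le> g tr \<and> g tr \<le> 1" for tr by (simp add: g_eq)
  have "\<exists>w<2^m. (1 / (2 * sqrt (real K))) * real K * real m * ((1 - 1 / (4 * real K)) * 1)^(2*K) / 4
     \<le> expected_regret (Pw w) nA 2 0 ((\<lambda>_. g) w) A K"
  proof (rule assouad[where nS=2])
    show "nA = 2^m" by (simp add: nA_def)
    show "0 < (2::nat)" by simp
    show "\<And>w s a. w < 2^m \<Longrightarrow> s < 2 \<Longrightarrow> a < nA \<Longrightarrow> set_pmf (Pw w s a) \<subseteq> {..<2}" by (rule supp)
    show "0 \<le> (1::real)" by simp
    show "0 \<le> 1 - 1 / (4 * real K)" using K by (simp add: field_simps)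
    show "0 \<le> 1 / (2 * sqrt (real K))" by simp
    fix w j :: nat and pol :: policy assume w: "w < 2^m"
    show "1 \<le> bcS UNIV (bernoulli_pmf (g tr)) (bernoulli_pmf (g tr))" for tr
      using bc_self[of "UNIV :: bool set" "bernoulli_pmf (g tr)"] by simp
    show "1 - 1 / (4 * real K) \<le> bcS (TR 2 nA 2) (run_episode (Pw w) nA pol 2 [] 0) (run_episode (Pw (flip_bit j w)) nA pol 2 [] 0)"
    proof -
      have inner: "1 - 1 / (4 * real K) \<le> bcS (TR 2 nA 2) (bind_pmf (Pw w 0 a) (M pol a)) (bind_pmf (Pw (flip_bit j w) 0 a) (M pol a))"
        if a: "a \<in> {..<nA}" for a
      proof -
        have "1 * bcS {..<2} (Pw w 0 a) (Pw (flip_bit j w) 0 a) \<le> bcS (TR 2 nA 2) (bind_pmf (Pw w 0 a) (M pol a)) (bind_pmf (Pw (flip_bit j w) 0 a) (M pol a))"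
        proof (rule bc_bind[OF finite_lessThan _ _ finite_TR])
          show "set_pmf (Pw w 0 a) \<subseteq> {..<2}" "set_pmf (Pw (flip_bit j w) 0 a) \<subseteq> {..<2}"
            using supp a by auto
          fix s' assume s': "s' \<in> {..<(2::nat)}"
          show "set_pmf (M pol a s') \<subseteq> TR 2 nA 2" using Msupp a s' by auto
          thus "set_pmf (M pol a s') \<subseteq> TR 2 nA 2" .
          show "1 \<le> bcS (TR 2 nA 2) (M pol a s') (M pol a s')"
            using bc_self[OF finite_TR Msupp] a s' by simp
        qed
        moreover have "1 - 1 / (4 * real K) \<le> bcS {..<2} (Pw w 0 a) (Pw (flip_bit j w) 0 a)"
        proof -
          define p where "p = qT c m w a"
          define p' where "p' = qT c m (flip_bit j w) a"
          have pr: "1/4 \<le> p" "p \<le> 3/4" "1/4 \<le> p'" "p' \<le> 3/4" using q_rng unfolding p_def p'_def by auto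
          have "\<bar>p - p'\<bar> = c * \<bar>Ssum m w a - Ssum m (flip_bit j w) a\<bar>"
            unfolding p_def p'_def qT_def using c0 by (simp add: abs_mult right_diff_distrib[symmetric])
          also have "\<dots> \<le> c * 2" using Ssum_flip c0 by (simp add: mult_left_mono)
          finally have d: "\<bar>p - p'\<bar> \<le> 2 * c" by simp
          have "1 - (2*c)^2 \<le> sqrt (p*p') + sqrt ((1-p)*(1-p'))"
            by (rule bc2_real[OF pr d])
          moreover have "(2*c)^2 = 1 / (4 * real K)"
            using K by (simp add: c_def power2_eq_square field_simps)
          moreover have "bcS {..<2} (Pw w 0 a) (Pw (flip_bit j w) 0 a) = sqrt ((1-p)*(1-p')) + sqrt (p*p')"
            unfolding bcS_def sum2 Pw_def
            using pmf_PT[of c m w a] pmf_PT[of c m "flip_bit j w" a] pr unfolding p_def p'_def by simp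
          ultimately show ?thesis by simp
        qed
        ultimately show ?thesis by simp
      qed
      have "(1 - 1 / (4 * real K)) * bcS {..<nA} (act nA pol 0) (act nA pol 0)
          \<le> bcS (TR 2 nA 2) (run_episode (Pw w) nA pol 2 [] 0) (run_episode (Pw (flip_bit j w)) nA pol 2 [] 0)"
        unfolding runE
        by (rule bc_bind[OF finite_lessThan act_supp[OF nA0] act_supp[OF nA0] finite_TR Bsupp Bsupp inner]) auto
      thus ?thesis using bc_self[OF finite_lessThan act_supp[OF nA0]] by simp
    qed
    show "1 / (2 * sqrt (real K)) * (\<Sum>j<m. Xp nA 0 w j pol)
        \<le> opt_value (Pw w) nA 2 0 g - value_of (Pw w) nA 2 0 g pol"
    proof -
      have "2 * c * (\<Sum>j<m. Xp nA 0 w j pol) \<le> opt_value (Pw w) nA 2 0 g - value_of (Pw w) nA 2 0 g pol"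
      proof (rule reg_lemma[OF _ w c0 val])
        show "nA = 2^m" by (simp add: nA_def)
        show "value_of (Pw w) nA 2 0 g pol' \<le> opt_value (Pw w) nA 2 0 g" for pol'
          by (rule opt_ge[where nS=2 and M=1]) (use supp nA0 g01 in auto)
      qed
      moreover have "2 * c = 1 / (2 * sqrt (real K))" by (simp add: c_def)
      ultimately show ?thesis by simp
    qed
  qed
  then obtain w where w: "w < 2^m" and
    reg: "(1 / (2 * sqrt (real K))) * real K * real m * ((1 - 1 / (4 * real K)) * 1)^(2*K) / 4
     \<le> expected_regret (Pw w) nA 2 0 g A K" by auto
  have "real m * sqrt (real K) / 16 = ((1 / (2 * sqrt (real K))) * real K * real m / 4) * (1/2)"
    using sK by (simp add: field_simps)
  also have "\<dots> \<le> ((1 / (2 * sqrt (real K))) * real K * real m / 4) * ((1 - 1 / (4 * real K)) * 1)^(2*K)"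
    by (rule mult_left_mono) (use Bern_half[OF K] in auto)
  also have "\<dots> = (1 / (2 * sqrt (real K))) * real K * real m * ((1 - 1 / (4 * real K)) * 1)^(2*K) / 4"
    by simp
  finally have R: "real m * sqrt (real K) / 16 \<le> expected_regret (Pw w) nA 2 0 g A K"
    using reg by linarith
  have lm: "linear_mixture (Suc m) 2 nA (psiT \<kappa>) (thT \<epsilon> w) (Pw w) B"
  proof -
    have p1: "pmf (Pw w s a) s' = (\<Sum>i<Suc m. psiT \<kappa> s a s' i * thT \<epsilon> w i)" if "s' < 2" for s a s'
    proof -
      have qr: "0 \<le> qT c m w a" "qT c m w a \<le> 1" using q_rng[of w a] by auto
      show ?thesis
      proof (cases "s' = 1")
        case True
        thus ?thesis unfolding psum[OF that] ke Pw_def using pmf_PT(1)[OF qr] by (simp add: qT_def)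
      next
        case False
        hence "s' = 0" using that by simp
        thus ?thesis unfolding psum[OF that] ke Pw_def using pmf_PT(2)[OF qr] by (simp add: qT_def)
      qed
    qed
    have p2: "vnorm (Suc m) (\<lambda>i. \<Sum>s'<2. psiT \<kappa> s a s' i * V s') \<le> 1"
      if "\<forall>s'<2. 0 \<le> V s' \<and> V s' \<le> 1" for s a V
      by (rule vec_norm[OF _ _ _ _ m \<kappa>_def]) (use that in auto)
    have p3: "vnorm (Suc m) (thT \<epsilon> w) \<le> B"
    proof -
      have sq: "(sg b)^2 = 1" for b by (simp add: sg_def)
      have "(\<Sum>i<Suc m. (thT \<epsilon> w i)^2) = 1 + real m * \<epsilon>^2"
        unfolding sum.lessThan_Suc_shift by (simp add: thT_def power_mult_distrib sq)
      also have "real m * \<epsilon>^2 = real m * real m / (4 * real K)"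
        unfolding \<epsilon>_def using sK by (simp add: power_divide power_mult_distrib)
      also have "\<dots> \<le> 1/4" using mK K by (simp add: field_simps)
      finally have "(\<Sum>i<Suc m. (thT \<epsilon> w i)^2) \<le> 4" by simp
      hence "vnorm (Suc m) (thT \<epsilon> w) \<le> sqrt 4" unfolding vnorm_def by (rule real_sqrt_le_mono)
      moreover have "sqrt (4::real) = 2" by (rule real_sqrt_unique) auto
      ultimately show ?thesis using B by simp
    qed
    show ?thesis unfolding linear_mixture_def using supp p1 p2 p3 by auto
  qed
  have lf: "linear_feedback dG 2 nA 2 phiT wT B"
  proof -
    have v: "vnorm dG wT = 1" using vnorm_unit[OF dG, of 1] by (simp add: wT_def[abs_def])
    show ?thesis unfolding linear_feedback_def using g01 v B unfolding g_def by auto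
  qed
  show ?thesis
    apply (rule exI[of _ 2], rule exI[of _ nA], rule exI[of _ 2], rule exI[of _ 0],
           rule exI[of _ "psiT \<kappa>"], rule exI[of _ "thT \<epsilon> w"], rule exI[of _ "Pw w"], rule exI[of _ phiT], rule exI[of _ wT])
    using nA0 lm lf R unfolding A_def g_def by auto
qed

lemma final_arith:
  fixes m dP dG K :: nat
  assumes "4 * m \<ge> dP + dG" "real m * sqrt (real K) / 16 \<le> X"
  shows "1/64 * (real dP + real dG) * sqrt (real K) \<le> X"
proof -
  have "real dP + real dG \<le> 4 * real m" using assms(1) by linarith
  hence "(real dP + real dG) * sqrt (real K) \<le> (4 * real m) * sqrt (real K)"
    by (rule mult_right_mono) simp
  thus ?thesis using assms(2) by simp
qed

theorem theorem4p5:
  shows "\<exists>c>0. \<exists>C::real. \<forall>(B::real) (dP::nat) (dG::nat) (K::nat).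
    B \<ge> 2 \<longrightarrow> dP \<ge> 2 \<longrightarrow> dG \<ge> 2 \<longrightarrow> real K \<ge> C * (real dP + real dG)\<^sup>2 \<longrightarrow>
    (\<forall>Alg::algorithm. \<exists>nS nA H s1 psi theta P phi w.
       0 < nS \<and> 0 < nA \<and> 0 < H \<and> s1 < nS \<and>
       linear_mixture dP nS nA psi theta P B \<and>
       linear_feedback dG nS nA H phi w B \<and>
       expected_regret P nA H s1 (lin_feedback dG phi w)
         (Alg (dP, dG, nS, nA, H, s1, psi, phi)) K
       \<ge> c * (real dP + real dG) * sqrt (real K))"
proof (rule exI[of _ "1/64::real"], rule conjI, simp, rule exI[of _ "1::real"], intro allI impI)
  fix B :: real and dP dG K :: nat and Alg :: algorithm
  assume B: "2 \<le> B" and dP: "2 \<le> dP" and dG: "2 \<le> dG" and K: "1 * (real dP + real dG)^2 \<le> real K"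
  have sq: "real n * real n \<le> real K" if "n \<le> dP + dG" for n
  proof -
    have "real n * real n \<le> (real dP + real dG) * (real dP + real dG)"
      using that by (intro mult_mono) auto
    thus ?thesis using K by (simp add: power2_eq_square)
  qed
  have K0: "0 < K" using sq[of 1] dP by simp
  show "\<exists>nS nA H s1 psi theta P phi w.
       0 < nS \<and> 0 < nA \<and> 0 < H \<and> s1 < nS \<and>
       linear_mixture dP nS nA psi theta P B \<and>
       linear_feedback dG nS nA H phi w B \<and>
       expected_regret P nA H s1 (lin_feedback dG phi w)
         (Alg (dP, dG, nS, nA, H, s1, psi, phi)) K
       \<ge> 1/64 * (real dP + real dG) * sqrt (real K)"
  proof (cases "dP \<le> dG")
    case True
    obtain m where m: "dG = Suc m" using dG by (cases dG) auto
    have ex: "\<exists>nS nA H s1 psi theta P phi w. 0 < nS \<and> 0 < nA \<and> 0 < H \<and> s1 < nS \<and>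
       linear_mixture dP nS nA psi theta P B \<and> linear_feedback (Suc m) nS nA H phi w B \<and>
       real m * sqrt (real K) / 16 \<le> expected_regret P nA H s1 (lin_feedback (Suc m) phi w)
         (Alg (dP, Suc m, nS, nA, H, s1, psi, phi)) K"
      by (rule feedback_case[OF K0 sq B]) (use m dP in auto)
    have ge: "4 * m \<ge> dP + dG" using True m dG by linarith
    from ex[unfolded m[symmetric]] show ?thesis
      apply (elim exE conjE)
      subgoal for nS nA H s1 psi theta P phi w
        apply (rule exI[of _ nS], rule exI[of _ nA], rule exI[of _ H], rule exI[of _ s1], rule exI[of _ psi],
               rule exI[of _ theta], rule exI[of _ P], rule exI[of _ phi], rule exI[of _ w])
        apply (intro conjI)
              apply assumption+
        apply (erule final_arith[OF ge])
        done
      done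
  next
    case False
    obtain m where m: "dP = Suc m" using dP by (cases dP) auto
    have ex: "\<exists>nS nA H s1 psi theta P phi w. 0 < nS \<and> 0 < nA \<and> 0 < H \<and> s1 < nS \<and>
       linear_mixture (Suc m) nS nA psi theta P B \<and> linear_feedback dG nS nA H phi w B \<and>
       real m * sqrt (real K) / 16 \<le> expected_regret P nA H s1 (lin_feedback dG phi w)
         (Alg (Suc m, dG, nS, nA, H, s1, psi, phi)) K"
      by (rule transition_case[OF K0 _ sq B]) (use m dP dG in auto)
    have ge: "4 * m \<ge> dP + dG" using False m dP by linarith
    from ex[unfolded m[symmetric]] show ?thesis
      apply (elim exE conjE)
      subgoal for nS nA H s1 psi theta P phi w
        apply (rule exI[of _ nS], rule exI[of _ nA], rule exI[of _ H], rule exI[of _ s1], rule exI[of _ psi],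
               rule exI[of _ theta], rule exI[of _ P], rule exI[of _ phi], rule exI[of _ w])
        apply (intro conjI)
              apply assumption+
        apply (erule final_arith[OF ge])
        done
      done
  qed
qed


end
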